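(* Let $S$ be a group and $A$ a left $S$-act without zero subacts. Then: (i) $A\amalg z_1$ and $A\amalg(z_1\amalg z_2)$ are not geometrically equivalent; (ii) $A\amalg(z_1\amalg z_2)$ and $A\amalg\coprod_{i\in I}z_i$ are geometrically equivalent for every set $I$ with $|I|>1$.
   Context: A left $S$-act is a nonempty set with an action $S\times A\to A$ satisfying $1a=a$, $(st)a=s(ta)$; homomorphisms preserve the action; $\amalg$ denotes coproduct (disjoint union). A zero $S$-act is a one-element $S$-act; $z,z_1,z_2,z_i$ denote zero $S$-acts. A zero subact of $A$ is a one-element subact (an element fixed by all of $S$). For a nonempty finite set $X$, $F_X=\coprod_{x\in X}S_x$ is the free $S$-act on $X$. For an $S$-act $G$ and a relation $T\subseteq F_X\times F_X$, $T'_G=\{\mu:F_X\to G \text{ homomorphism}: T\subseteq\ker\mu\}$ and $T''_G=\bigcap_{\mu\in T'_G}\ker\mu$ (empty intersection $=F_X\times F_X$). $S$-acts $G_1,G_2$ are geometrically equivalent iff $T''_{G_1}=T''_{G_2}$ for all nonempty finite $X$ and all $T\subseteq F_X\times F_X$. *)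

theory Defs
  imports "HOL-Algebra.Group"
begin

type_synonym ('s, 'a) sact = "'a set \<times> ('s \<Rightarrow> 'a \<Rightarrow> 'a)"

definition is_act :: "('s, 'm) monoid_scheme \<Rightarrow> ('s, 'a) sact \<Rightarrow> bool" where
  "is_act S A \<longleftrightarrow> fst A \<noteq> {} \<and>
     (\<forall>s\<in>carrier S. \<forall>a\<in>fst A. snd A s a \<in> fst A) \<and>
     (\<forall>a\<in>fst A. snd A \<one>\<^bsub>S\<^esub> a = a) \<and>
     (\<forall>s\<in>carrier S. \<forall>t\<in>carrier S. \<forall>a\<in>fst A. snd A (s \<otimes>\<^bsub>S\<^esub> t) a = snd A s (snd A t a))"

definition is_zero_act :: "('s, 'm) monoid_scheme \<Rightarrow> ('s, 'a) sact \<Rightarrow> bool" where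
  "is_zero_act S Z \<longleftrightarrow> is_act S Z \<and> (\<exists>c. fst Z = {c})"

definition has_zero_subact :: "('s, 'm) monoid_scheme \<Rightarrow> ('s, 'a) sact \<Rightarrow> bool" where
  "has_zero_subact S A \<longleftrightarrow> (\<exists>a\<in>fst A. \<forall>s\<in>carrier S. snd A s a = a)"

definition coprod :: "('s, 'a) sact \<Rightarrow> ('s, 'b) sact \<Rightarrow> ('s, 'a + 'b) sact" where
  "coprod A B = (Inl ` fst A \<union> Inr ` fst B,
     (\<lambda>s u. case u of Inl a \<Rightarrow> Inl (snd A s a) | Inr b \<Rightarrow> Inr (snd B s b)))"

definition coprod_fam :: "'i set \<Rightarrow> ('i \<Rightarrow> ('s, 'a) sact) \<Rightarrow> ('s, 'i \<times> 'a) sact" where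
  "coprod_fam I Z = (SIGMA i:I. fst (Z i), (\<lambda>s (i, a). (i, snd (Z i) s a)))"

text \<open>Free S-act on a finite set X: the element (x, s) stands for s x in S_x.\<close>
definition free_act :: "('s, 'm) monoid_scheme \<Rightarrow> 'x set \<Rightarrow> ('s, 'x \<times> 's) sact" where
  "free_act S X = (X \<times> carrier S, (\<lambda>t (x, s). (x, t \<otimes>\<^bsub>S\<^esub> s)))"

definition act_hom :: "('s, 'm) monoid_scheme \<Rightarrow> ('s, 'a) sact \<Rightarrow> ('s, 'b) sact \<Rightarrow> ('a \<Rightarrow> 'b) set" where
  "act_hom S A B = {\<mu>. (\<forall>a\<in>fst A. \<mu> a \<in> fst B) \<and>
      (\<forall>s\<in>carrier S. \<forall>a\<in>fst A. \<mu> (snd A s a) = snd B s (\<mu> a))}"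

definition act_ker :: "('s, 'a) sact \<Rightarrow> ('a \<Rightarrow> 'b) \<Rightarrow> ('a \<times> 'a) set" where
  "act_ker A \<mu> = {(u, v). u \<in> fst A \<and> v \<in> fst A \<and> \<mu> u = \<mu> v}"

definition T_prime :: "('s, 'm) monoid_scheme \<Rightarrow> 'x set \<Rightarrow> ('s, 'g) sact
    \<Rightarrow> (('x \<times> 's) \<times> ('x \<times> 's)) set \<Rightarrow> (('x \<times> 's) \<Rightarrow> 'g) set" where
  "T_prime S X G T = {\<mu> \<in> act_hom S (free_act S X) G. T \<subseteq> act_ker (free_act S X) \<mu>}"

text \<open>T''_G (empty intersection = F_X x F_X)\<close>
definition T_dprime :: "('s, 'm) monoid_scheme \<Rightarrow> 'x set \<Rightarrow> ('s, 'g) sact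
    \<Rightarrow> (('x \<times> 's) \<times> ('x \<times> 's)) set \<Rightarrow> (('x \<times> 's) \<times> ('x \<times> 's)) set" where
  "T_dprime S X G T = {(u, v). u \<in> fst (free_act S X) \<and> v \<in> fst (free_act S X) \<and>
      (\<forall>\<mu> \<in> T_prime S X G T. \<mu> u = \<mu> v)}"

text \<open>Geometric equivalence; finite sets X are taken as subsets of nat
  (every finite set is in bijection with one).\<close>
definition geom_equiv :: "('s, 'm) monoid_scheme \<Rightarrow> ('s, 'a) sact \<Rightarrow> ('s, 'b) sact \<Rightarrow> bool" where
  "geom_equiv S G1 G2 \<longleftrightarrow>
     (\<forall>X :: nat set. finite X \<and> X \<noteq> {} \<longrightarrow>
        (\<forall>T \<subseteq> fst (free_act S X) \<times> fst (free_act S X).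
           T_dprime S X G1 T = T_dprime S X G2 T))"

end

theory Submission
  imports Defs
begin

lemma sep_sub:
  assumes sep: "\<And>p q. p \<in> fst G1 \<Longrightarrow> q \<in> fst G1 \<Longrightarrow> p \<noteq> q \<Longrightarrow> \<exists>f\<in>act_hom S G1 G2. f p \<noteq> f q"
  shows "T_dprime S X G2 T \<subseteq> T_dprime S X G1 T"
proof
  fix w assume w: "w \<in> T_dprime S X G2 T"
  obtain u v where uv: "w = (u,v)" by (cases w)
  have u: "u \<in> fst (free_act S X)" "v \<in> fst (free_act S X)"
    and all: "\<forall>mu\<in>T_prime S X G2 T. mu u = mu v" using w uv by (auto simp: T_dprime_def)
  have "mu u = mu v" if mu: "mu \<in> T_prime S X G1 T" for mu
  proof (rule ccontr)
    assume ne: "mu u \<noteq> mu v"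
    have mh: "mu \<in> act_hom S (free_act S X) G1" and mT: "T \<subseteq> act_ker (free_act S X) mu"
      using mu by (auto simp: T_prime_def)
    have "mu u \<in> fst G1" "mu v \<in> fst G1" using mh u by (auto simp: act_hom_def)
    then obtain f where f: "f \<in> act_hom S G1 G2" "f (mu u) \<noteq> f (mu v)" using sep ne by blast
    have "f o mu \<in> T_prime S X G2 T"
      using mh mT f(1) unfolding T_prime_def act_hom_def act_ker_def by fastforce
    then have "(f o mu) u = (f o mu) v" using all by blast
    with f show False by simp
  qed
  then show "w \<in> T_dprime S X G1 T" using u uv by (auto simp: T_dprime_def)
qed

lemma zero_fix:
  assumes "is_zero_act S Z" "s \<in> carrier S" "c \<in> fst Z"
  shows "snd Z s c = c"
  using assms unfolding is_zero_act_def is_act_def by auto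

lemma part1:
  fixes S :: "('s, 'm) monoid_scheme" and A :: "('s, 'a) sact"
    and z1 :: "('s, 'b) sact" and z2 :: "('s, 'c) sact"
  assumes grp: "group S" and A: "\<not> has_zero_subact S A"
    and z1: "is_zero_act S z1" and z2: "is_zero_act S z2"
  shows "\<not> geom_equiv S (coprod A z1) (coprod A (coprod z1 z2))"
proof
  assume ge: "geom_equiv S (coprod A z1) (coprod A (coprod z1 z2))"
  obtain c1 where c1: "fst z1 = {c1}" using z1 by (auto simp: is_zero_act_def)
  obtain c2 where c2: "fst z2 = {c2}" using z2 by (auto simp: is_zero_act_def)
  have fx1: "snd z1 s c1 = c1" if "s \<in> carrier S" for s using zero_fix[OF z1 that] c1 by simp
  have fx2: "snd z2 s c2 = c2" if "s \<in> carrier S" for s using zero_fix[OF z2 that] c2 by simp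
  have mon: "monoid S" using grp by (simp add: group_def)
  have one: "\<one>\<^bsub>S\<^esub> \<in> carrier S" using monoid.one_closed[OF mon] .
  define X :: "nat set" where "X = {0,1}"
  define T where "T = {((x,s),(x,\<one>\<^bsub>S\<^esub>)) | x s. x \<in> X \<and> s \<in> carrier S}"
  have TF: "T \<subseteq> fst (free_act S X) \<times> fst (free_act S X)" using one by (auto simp: T_def free_act_def)
  have eq: "T_dprime S X (coprod A z1) T = T_dprime S X (coprod A (coprod z1 z2)) T"
    using ge TF unfolding geom_equiv_def X_def by auto
  have in1: "((0,\<one>\<^bsub>S\<^esub>),(1,\<one>\<^bsub>S\<^esub>)) \<in> T_dprime S X (coprod A z1) T"
  proof -
    have key: "mu (x,\<one>\<^bsub>S\<^esub>) = Inr c1" if mu: "mu \<in> T_prime S X (coprod A z1) T" and x: "x \<in> X" for mu x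
    proof -
      have mh: "mu \<in> act_hom S (free_act S X) (coprod A z1)" and mT: "T \<subseteq> act_ker (free_act S X) mu"
        using mu by (auto simp: T_prime_def)
      have fixp: "snd (coprod A z1) s (mu (x,\<one>\<^bsub>S\<^esub>)) = mu (x,\<one>\<^bsub>S\<^esub>)" if s: "s \<in> carrier S" for s
      proof -
        have "((x,s),(x,\<one>\<^bsub>S\<^esub>)) \<in> T" using x s by (auto simp: T_def)
        hence "mu (x,s) = mu (x,\<one>\<^bsub>S\<^esub>)" using mT by (auto simp: act_ker_def)
        moreover have "mu (x,s) = mu (snd (free_act S X) s (x,\<one>\<^bsub>S\<^esub>))"
          using s monoid.r_one[OF mon s] by (simp add: free_act_def)
        moreover have "mu (snd (free_act S X) s (x,\<one>\<^bsub>S\<^esub>)) = snd (coprod A z1) s (mu (x,\<one>\<^bsub>S\<^esub>))"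
          using mh s x one by (auto simp: act_hom_def free_act_def)
        ultimately show ?thesis by simp
      qed
      have mem: "mu (x,\<one>\<^bsub>S\<^esub>) \<in> fst (coprod A z1)" using mh x one by (auto simp: act_hom_def free_act_def)
      show ?thesis
      proof (cases "mu (x,\<one>\<^bsub>S\<^esub>)")
        case (Inl a)
        with mem have "a \<in> fst A" by (auto simp: coprod_def)
        moreover have "\<forall>s\<in>carrier S. snd A s a = a" using fixp Inl by (auto simp: coprod_def)
        ultimately show ?thesis using A by (auto simp: has_zero_subact_def)
      next
        case (Inr b) with mem c1 show ?thesis by (auto simp: coprod_def)
      qed
    qed
    have X01: "0 \<in> X" "(1::nat) \<in> X" by (auto simp: X_def)
    have "mu (0,\<one>\<^bsub>S\<^esub>) = mu (1,\<one>\<^bsub>S\<^esub>)" if "mu \<in> T_prime S X (coprod A z1) T" for mu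
      using key[OF that X01(1)] key[OF that X01(2)] by simp
    then show ?thesis using one X01 unfolding T_dprime_def free_act_def by auto
  qed
  define mu where "mu = (\<lambda>(x::nat, s::'s). if x = 0 then Inr (Inl c1) else (Inr (Inr c2) :: 'a + 'b + 'c))"
  have "mu \<in> T_prime S X (coprod A (coprod z1 z2)) T"
    unfolding T_prime_def act_hom_def act_ker_def T_def free_act_def coprod_def mu_def
    using c1 c2 fx1 fx2 one by auto
  moreover have "mu (0,\<one>\<^bsub>S\<^esub>) \<noteq> mu (1,\<one>\<^bsub>S\<^esub>)" by (simp add: mu_def)
  ultimately have "((0,\<one>\<^bsub>S\<^esub>),(1,\<one>\<^bsub>S\<^esub>)) \<notin> T_dprime S X (coprod A (coprod z1 z2)) T"
    unfolding T_dprime_def by blast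
  with in1 eq show False by simp
qed

lemma part2:
  fixes S :: "('s, 'm) monoid_scheme" and A :: "('s, 'a) sact"
    and z1 :: "('s, 'b) sact" and z2 :: "('s, 'c) sact" and I :: "'i set"
    and z :: "'i \<Rightarrow> ('s, 'd) sact"
  assumes z1: "is_zero_act S z1" and z2: "is_zero_act S z2" and zi: "\<forall>i\<in>I. is_zero_act S (z i)"
    and ij: "i0 \<in> I" "j0 \<in> I" "i0 \<noteq> j0"
  shows "geom_equiv S (coprod A (coprod z1 z2)) (coprod A (coprod_fam I z))"
proof -
  obtain c1 where c1: "fst z1 = {c1}" using z1 by (auto simp: is_zero_act_def)
  obtain c2 where c2: "fst z2 = {c2}" using z2 by (auto simp: is_zero_act_def)
  define d where "d i = (SOME c. fst (z i) = {c})" for i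
  have d: "fst (z i) = {d i}" if "i \<in> I" for i
  proof -
    have "\<exists>c. fst (z i) = {c}" using zi that by (auto simp: is_zero_act_def)
    then show ?thesis unfolding d_def by (rule someI_ex)
  qed
  have fx1: "snd z1 s c1 = c1" if "s \<in> carrier S" for s using zero_fix[OF z1 that] c1 by simp
  have fx2: "snd z2 s c2 = c2" if "s \<in> carrier S" for s using zero_fix[OF z2 that] c2 by simp
  have fxd: "snd (z i) s (d i) = d i" if "i \<in> I" "s \<in> carrier S" for i s
    using zero_fix[OF _ that(2), of "z i" "d i"] zi that d by auto
  define e where "e = ((\<lambda>u. case u of Inl a \<Rightarrow> Inl a
       | Inr w \<Rightarrow> Inr (case w of Inl _ \<Rightarrow> (i0, d i0) | Inr _ \<Rightarrow> (j0, d j0))) :: 'a + 'b + 'c \<Rightarrow> 'a + 'i \<times> 'd)"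
  have e_hom: "e \<in> act_hom S (coprod A (coprod z1 z2)) (coprod A (coprod_fam I z))"
    unfolding act_hom_def coprod_def coprod_fam_def e_def using c1 c2 d fx1 fx2 fxd ij by auto
  have e_inj: "e p \<noteq> e q" if "p \<in> fst (coprod A (coprod z1 z2))" "q \<in> fst (coprod A (coprod z1 z2))" "p \<noteq> q" for p q
    using that c1 c2 ij unfolding coprod_def e_def by auto
  define f where "f k u = (case u of Inl a \<Rightarrow> Inl a
       | Inr (i, _) \<Rightarrow> Inr (if i = k then Inl c1 else Inr c2))" for k and u :: "'a + 'i \<times> 'd"
  have f_hom: "f k \<in> act_hom S (coprod A (coprod_fam I z)) (coprod A (coprod z1 z2))" for k
    unfolding act_hom_def coprod_def coprod_fam_def f_def using c1 c2 d fx1 fx2 by (auto split: if_splits)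
  have f_sep: "\<exists>k. f k p \<noteq> f k q" if p: "p \<in> fst (coprod A (coprod_fam I z))"
    and q: "q \<in> fst (coprod A (coprod_fam I z))" and ne: "p \<noteq> q" for p q
  proof (cases p)
    case (Inl a)
    show ?thesis
    proof (cases q)
      case (Inl b) then have "f i0 p \<noteq> f i0 q" using ne \<open>p = Inl a\<close> by (simp add: f_def)
      thus ?thesis by blast
    next
      case (Inr w) then have "f i0 p \<noteq> f i0 q" using \<open>p = Inl a\<close> by (auto simp: f_def split: prod.split)
      thus ?thesis by blast
    qed
  next
    case (Inr w)
    obtain k x where w: "w = (k,x)" by (cases w)
    have "f k p \<noteq> f k q"
      using p q ne Inr w d unfolding coprod_def coprod_fam_def f_def by (auto split: if_splits)
    thus ?thesis by blast
  qed
  have s1: "T_dprime S X (coprod A (coprod_fam I z)) T \<subseteq> T_dprime S X (coprod A (coprod z1 z2)) T" for X T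
    by (rule sep_sub) (use e_hom e_inj in blast)
  have s2: "T_dprime S X (coprod A (coprod z1 z2)) T \<subseteq> T_dprime S X (coprod A (coprod_fam I z)) T" for X T
    by (rule sep_sub) (use f_hom f_sep in blast)
  show ?thesis unfolding geom_equiv_def using s1 s2 by blast
qed

theorem proposition3p14:
  fixes S :: "('s, 'm) monoid_scheme"
    and A :: "('s, 'a) sact"
  assumes "group S"
    and "is_act S A"
    and "\<not> has_zero_subact S A"
  shows "(\<forall>(z1 :: ('s, 'b) sact) (z2 :: ('s, 'c) sact).
            is_zero_act S z1 \<and> is_zero_act S z2 \<longrightarrow>
            \<not> geom_equiv S (coprod A z1) (coprod A (coprod z1 z2)))
       \<and> (\<forall>(z1 :: ('s, 'b) sact) (z2 :: ('s, 'c) sact) (I :: 'i set) (z :: 'i \<Rightarrow> ('s, 'd) sact).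
            is_zero_act S z1 \<and> is_zero_act S z2 \<and> (\<forall>i\<in>I. is_zero_act S (z i)) \<and>
            (\<exists>i\<in>I. \<exists>j\<in>I. i \<noteq> j) \<longrightarrow>
            geom_equiv S (coprod A (coprod z1 z2)) (coprod A (coprod_fam I z)))"
proof (intro conjI allI impI)
  fix z1 :: "('s, 'b) sact" and z2 :: "('s, 'c) sact"
  assume h: "is_zero_act S z1 \<and> is_zero_act S z2"
  show "\<not> geom_equiv S (coprod A z1) (coprod A (coprod z1 z2))"
    using h part1[OF assms(1) assms(3), of z1 z2] by blast
next
  fix z1 :: "('s, 'b) sact" and z2 :: "('s, 'c) sact" and I :: "'i set" and z :: "'i \<Rightarrow> ('s, 'd) sact"
  assume h: "is_zero_act S z1 \<and> is_zero_act S z2 \<and> (\<forall>i\<in>I. is_zero_act S (z i)) \<and>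
            (\<exists>i\<in>I. \<exists>j\<in>I. i \<noteq> j)"
  then obtain i j where ij: "i \<in> I" "j \<in> I" "i \<noteq> j" by blast
  show "geom_equiv S (coprod A (coprod z1 z2)) (coprod A (coprod_fam I z))"
    using h part2[OF _ _ _ ij, of S z1 z2 z A] by blast
qed

end
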